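(* Let $I$ be a countable set with $|I|\ge2$, let $\mathfrak{M}_i=(S_i,\mathcal{L}_i)$, $i\in I$, be partial linear spaces, $\mathfrak{M}=\bigotimes_{i\in I}\mathfrak{M}_i$ with point set $S=\prod_i S_i$, let $\mathcal{H}_i$ be a hyperplane of $\mathfrak{M}_i$ for each $i$, and let $\mathcal{H}=\bigcup_{i\in I}\{x\in S:x_i\in\mathcal{H}_i\}$. Then: (i) the point-line structure of $\mathfrak{M}\setminus\mathcal{H}$ (without parallelism) is isomorphic to the Segre product $\bigotimes_{i\in I}\mathfrak{N}_i$, where $\mathfrak{N}_i$ is the point-line structure of $\mathfrak{M}_i\setminus\mathcal{H}_i$; in fact $S\setminus\mathcal{H}=\prod_{i\in I}(S_i\setminus\mathcal{H}_i)$; (ii) $\mathfrak{M}\setminus\mathcal{H}=(S\setminus\mathcal{H},\text{lines},\parallel_\mathcal{H})$ is isomorphic to $\bigotimes_{i\in I}\mathfrak{N}_i$ equipped with the parallelism $\parallel^\ast$ defined by: for lines $L=a[i/l]$ and $K=b[j/k]$ of $\bigotimes_i\mathfrak{N}_i$ (with $l,k$ lines of $\mathfrak{M}_i\setminus\mathcal{H}_i$, resp. $\mathfrak{M}_j\setminus\mathcal{H}_j$), $L\parallel^\ast K$ iff for every coordinate $s\in I$ the $s$-th coordinate sets $L_s$, $K_s$ of $L$, $K$ are either equal or are lines with $L_s\parallel_{\mathcal{H}_s}K_s$ (equivalently: $i=j$, $a_s=b_s$ for all $s\neq i$, and $l=k$ or $l\parallel_{\mathcal{H}_i}k$).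
   Context: A partial linear space is a pair $(S,\mathcal{L})$ of points and lines such that every line has at least two points, every point lies on a line, two distinct lines share at most one point. A subspace is a set such that any line meeting it in at least two points lies in it; a hyperplane is a proper subspace meeting every line. Segre product: for $a\in\prod_i S_i$, $x\in S_i$, $a[i/x]$ is $a$ with $i$-th coordinate replaced by $x$, $a[i/A]=\{a[i/x]:x\in A\}$; lines are $a[i/l]$ with $l$ a line of the $i$-th factor; the $s$-th coordinate set of $a[i/l]$ is $l$ if $s=i$ and $\{a_s\}$ otherwise. For a hyperplane $\mathcal{H}$ of a partial linear space $(S,\mathcal{L})$, each line $L\not\subseteq\mathcal{H}$ meets $\mathcal{H}$ in a unique point $L^\infty$; the complement $\mathfrak{M}\setminus\mathcal{H}$ has points $S\setminus\mathcal{H}$, lines $L\setminus\mathcal{H}$ for $L\not\subseteq\mathcal{H}$, and parallelism $L\parallel_\mathcal{H}K$ iff $L^\infty=K^\infty$. *)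

theory Defs
  imports Main "HOL-Library.FuncSet" "HOL-Library.Countable_Set"
begin

definition partial_linear_space :: "'p set \<Rightarrow> 'p set set \<Rightarrow> bool" where
  "partial_linear_space S Ls \<longleftrightarrow>
     (\<forall>L\<in>Ls. L \<subseteq> S \<and> (\<exists>x y. x \<in> L \<and> y \<in> L \<and> x \<noteq> y)) \<and>
     (\<forall>p\<in>S. \<exists>L\<in>Ls. p \<in> L) \<and>
     (\<forall>L\<in>Ls. \<forall>K\<in>Ls. L \<noteq> K \<longrightarrow> (\<forall>x y. x \<in> L \<inter> K \<and> y \<in> L \<inter> K \<longrightarrow> x = y))"

definition subspace :: "'p set \<Rightarrow> 'p set set \<Rightarrow> 'p set \<Rightarrow> bool" where
  "subspace S Ls X \<longleftrightarrow> X \<subseteq> S \<and>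
     (\<forall>L\<in>Ls. (\<exists>x y. x \<noteq> y \<and> x \<in> L \<inter> X \<and> y \<in> L \<inter> X) \<longrightarrow> L \<subseteq> X)"

definition hyperplane :: "'p set \<Rightarrow> 'p set set \<Rightarrow> 'p set \<Rightarrow> bool" where
  "hyperplane S Ls H \<longleftrightarrow> subspace S Ls H \<and> H \<noteq> S \<and> (\<forall>L\<in>Ls. L \<inter> H \<noteq> {})"

definition inf_pt :: "'p set \<Rightarrow> 'p set \<Rightarrow> 'p" where
  "inf_pt H L = (THE p. p \<in> L \<inter> H)"

definition compl_lines :: "'p set set \<Rightarrow> 'p set \<Rightarrow> 'p set set" where
  "compl_lines Ls H = {L - H | L. L \<in> Ls \<and> \<not> L \<subseteq> H}"

definition compl_par :: "'p set set \<Rightarrow> 'p set \<Rightarrow> 'p set \<Rightarrow> 'p set \<Rightarrow> bool" where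
  "compl_par Ls H L' K' \<longleftrightarrow>
     (\<exists>L K. L \<in> Ls \<and> K \<in> Ls \<and> \<not> L \<subseteq> H \<and> \<not> K \<subseteq> H \<and>
            L' = L - H \<and> K' = K - H \<and> inf_pt H L = inf_pt H K)"

definition segre_points :: "'i set \<Rightarrow> ('i \<Rightarrow> 'p set) \<Rightarrow> ('i \<Rightarrow> 'p) set" where
  "segre_points I S = PiE I S"

definition segre_line :: "('i \<Rightarrow> 'p) \<Rightarrow> 'i \<Rightarrow> 'p set \<Rightarrow> ('i \<Rightarrow> 'p) set" where
  "segre_line a i l = (\<lambda>x. a(i := x)) ` l"

definition segre_lines :: "'i set \<Rightarrow> ('i \<Rightarrow> 'p set) \<Rightarrow> ('i \<Rightarrow> 'p set set) \<Rightarrow> ('i \<Rightarrow> 'p) set set" where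
  "segre_lines I S Ls = {segre_line a i l | a i l. a \<in> PiE I S \<and> i \<in> I \<and> l \<in> Ls i}"

definition coord_set :: "('i \<Rightarrow> 'p) \<Rightarrow> 'i \<Rightarrow> 'p set \<Rightarrow> 'i \<Rightarrow> 'p set" where
  "coord_set a i l s = (if s = i then l else {a s})"

definition segre_par ::
  "'i set \<Rightarrow> ('i \<Rightarrow> 'p set) \<Rightarrow> ('i \<Rightarrow> 'p set set) \<Rightarrow> ('i \<Rightarrow> 'p set \<Rightarrow> 'p set \<Rightarrow> bool)
    \<Rightarrow> ('i \<Rightarrow> 'p) set \<Rightarrow> ('i \<Rightarrow> 'p) set \<Rightarrow> bool" where
  "segre_par I S Ls par L K \<longleftrightarrow>
     (\<exists>a i l b j k. a \<in> PiE I S \<and> i \<in> I \<and> l \<in> Ls i \<and>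
                   b \<in> PiE I S \<and> j \<in> I \<and> k \<in> Ls j \<and>
                   L = segre_line a i l \<and> K = segre_line b j k \<and>
                   (\<forall>s\<in>I. coord_set a i l s = coord_set b j k s \<or> (s = i \<and> s = j \<and> par i l k)))"

definition segre_hyp :: "'i set \<Rightarrow> ('i \<Rightarrow> 'p set) \<Rightarrow> ('i \<Rightarrow> 'p set) \<Rightarrow> ('i \<Rightarrow> 'p) set" where
  "segre_hyp I S Hs = (\<Union>i\<in>I. {x \<in> PiE I S. x i \<in> Hs i})"

end

theory Submission
  imports Defs
begin

lemma inf_pt_eq: "L \<inter> H = {p} \<Longrightarrow> inf_pt H L = p"
  unfolding inf_pt_def by (rule the_equality) auto

lemma fac_inf:
  assumes "hyperplane S Ls H" "l \<in> Ls" "\<not> l \<subseteq> H"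
  shows "l \<inter> H = {inf_pt H l}"
proof -
  obtain p where p: "p \<in> l \<inter> H" using assms unfolding hyperplane_def by blast
  have u: "q = p" if "q \<in> l \<inter> H" for q
  proof (rule ccontr)
    assume "q \<noteq> p"
    then have "l \<subseteq> H" using assms p that unfolding hyperplane_def subspace_def by blast
    then show False using assms by blast
  qed
  have "l \<inter> H = {p}" using p u by blast
  then show ?thesis using inf_pt_eq by metis
qed

lemma hyp_iff: "x \<in> segre_hyp I S Hs \<longleftrightarrow> x \<in> PiE I S \<and> (\<exists>i\<in>I. x i \<in> Hs i)"
  by (auto simp: segre_hyp_def)

lemma line_mem: "y \<in> segre_line a i l \<longleftrightarrow> (\<exists>x\<in>l. y = a(i:=x))"
  by (auto simp: segre_line_def)

lemma upd_PiE: "a \<in> PiE I S \<Longrightarrow> i \<in> I \<Longrightarrow> x \<in> S i \<Longrightarrow> a(i:=x) \<in> PiE I S"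
  by (auto simp: PiE_iff extensional_def)

lemma line_upd: "segre_line (a(i:=x)) i l = segre_line a i l"
  by (simp add: segre_line_def)

lemma good_line:
  assumes pls: "\<forall>i\<in>I. partial_linear_space (S i) (Ls i)"
    and hyp: "\<forall>i\<in>I. hyperplane (S i) (Ls i) (Hs i)"
    and a: "a \<in> PiE I S" and i: "i\<in>I" and l: "l \<in> Ls i"
    and nh: "\<not> segre_line a i l \<subseteq> segre_hyp I S Hs"
  shows "(\<forall>s\<in>I-{i}. a s \<notin> Hs s) \<and> \<not> l \<subseteq> Hs i
     \<and> segre_line a i l - segre_hyp I S Hs = segre_line a i (l - Hs i)
     \<and> inf_pt (segre_hyp I S Hs) (segre_line a i l) = a(i := inf_pt (Hs i) l)"
proof -
  have lS: "l \<subseteq> S i" using pls i l unfolding partial_linear_space_def by blast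
  have inH: "a(i:=x) \<in> segre_hyp I S Hs \<longleftrightarrow> (\<forall>s\<in>I-{i}. a s \<notin> Hs s) \<longrightarrow> x \<in> Hs i" if "x \<in> l" for x
    using that lS a i upd_PiE[OF a i] by (auto simp: hyp_iff)
  have inH2: "a(i:=x) \<in> segre_hyp I S Hs \<longleftrightarrow> (\<exists>s\<in>I. (a(i:=x)) s \<in> Hs s)" if "x \<in> l" for x
    using that lS a i upd_PiE[OF a i] by (auto simp: hyp_iff)
  have g: "\<forall>s\<in>I-{i}. a s \<notin> Hs s"
  proof
    fix s assume s: "s \<in> I-{i}"
    show "a s \<notin> Hs s"
    proof
      assume "a s \<in> Hs s"
      then have "segre_line a i l \<subseteq> segre_hyp I S Hs"
      proof (intro subsetI)
        fix y assume "y \<in> segre_line a i l"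
        then obtain x where x: "x \<in> l" "y = a(i:=x)" by (auto simp: line_mem)
        have "(a(i:=x)) s \<in> Hs s" using s \<open>a s \<in> Hs s\<close> by auto
        then show "y \<in> segre_hyp I S Hs" using inH2[OF x(1)] x s by blast
      qed
      then show False using nh by blast
    qed
  qed
  have nl: "\<not> l \<subseteq> Hs i"
  proof
    assume "l \<subseteq> Hs i"
    then have "segre_line a i l \<subseteq> segre_hyp I S Hs"
      using i inH2 by (force simp: line_mem)
    then show False using nh by blast
  qed
  have inH3: "a(i:=x) \<in> segre_hyp I S Hs \<longleftrightarrow> x \<in> Hs i" if "x \<in> l" for x
    using inH[OF that] g by blast
  have m: "segre_line a i l - segre_hyp I S Hs = segre_line a i (l - Hs i)"
    using inH3 by (auto simp: line_mem; blast)
  have fi: "l \<inter> Hs i = {inf_pt (Hs i) l}" using fac_inf hyp i l nl by blast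
  have "segre_line a i l \<inter> segre_hyp I S Hs = {a(i := inf_pt (Hs i) l)}"
  proof
    show "segre_line a i l \<inter> segre_hyp I S Hs \<subseteq> {a(i := inf_pt (Hs i) l)}"
    proof
      fix y assume "y \<in> segre_line a i l \<inter> segre_hyp I S Hs"
      then obtain x where x: "x \<in> l" "y = a(i:=x)" "y \<in> segre_hyp I S Hs" by (auto simp: line_mem)
      then have "x \<in> l \<inter> Hs i" using inH3 by blast
      then have "x = inf_pt (Hs i) l" using fi by blast
      then show "y \<in> {a(i := inf_pt (Hs i) l)}" using x by simp
    qed
    show "{a(i := inf_pt (Hs i) l)} \<subseteq> segre_line a i l \<inter> segre_hyp I S Hs"
      using inH3 fi by (auto simp: line_mem)
  qed
  then show ?thesis using g nl m inf_pt_eq by metis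
qed

lemma pick:
  assumes "a \<in> PiE I S" "i \<in> I" "l \<subseteq> S i" "\<not> l \<subseteq> Hs i" "\<forall>s\<in>I-{i}. a s \<notin> Hs s"
  shows "\<exists>x\<in>l - Hs i. a(i:=x) \<in> PiE I (\<lambda>i. S i - Hs i)"
proof -
  obtain x where x: "x \<in> l" "x \<notin> Hs i" using assms by blast
  have "a(i:=x) \<in> PiE I (\<lambda>i. S i - Hs i)" using assms x by (auto simp: PiE_iff extensional_def)
  then show ?thesis using x by blast
qed

lemma points_eq: "segre_points I S - segre_hyp I S Hs = segre_points I (\<lambda>i. S i - Hs i)"
  by (auto simp: segre_points_def hyp_iff PiE_iff)

lemma lines_eq:
  assumes pls: "\<forall>i\<in>I. partial_linear_space (S i) (Ls i)"
    and hyp: "\<forall>i\<in>I. hyperplane (S i) (Ls i) (Hs i)"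
  shows "compl_lines (segre_lines I S Ls) (segre_hyp I S Hs)
           = segre_lines I (\<lambda>i. S i - Hs i) (\<lambda>i. compl_lines (Ls i) (Hs i))"
proof
  show "compl_lines (segre_lines I S Ls) (segre_hyp I S Hs)
           \<subseteq> segre_lines I (\<lambda>i. S i - Hs i) (\<lambda>i. compl_lines (Ls i) (Hs i))"
  proof
    fix L assume "L \<in> compl_lines (segre_lines I S Ls) (segre_hyp I S Hs)"
    then obtain a i l where a: "a \<in> PiE I S" and i: "i \<in> I" and l: "l \<in> Ls i"
      and nh: "\<not> segre_line a i l \<subseteq> segre_hyp I S Hs"
      and L: "L = segre_line a i l - segre_hyp I S Hs"
      unfolding compl_lines_def segre_lines_def by blast
    note g = good_line[OF pls hyp a i l nh]
    have lS: "l \<subseteq> S i" using pls i l unfolding partial_linear_space_def by blast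
    obtain x where x: "x \<in> l - Hs i" "a(i:=x) \<in> PiE I (\<lambda>i. S i - Hs i)"
      using pick[OF a i lS] g by blast
    have "l - Hs i \<in> compl_lines (Ls i) (Hs i)" using l g unfolding compl_lines_def by blast
    moreover have "L = segre_line (a(i:=x)) i (l - Hs i)" using L g line_upd by metis
    ultimately show "L \<in> segre_lines I (\<lambda>i. S i - Hs i) (\<lambda>i. compl_lines (Ls i) (Hs i))"
      using x i unfolding segre_lines_def by blast
  qed
  show "segre_lines I (\<lambda>i. S i - Hs i) (\<lambda>i. compl_lines (Ls i) (Hs i))
     \<subseteq> compl_lines (segre_lines I S Ls) (segre_hyp I S Hs)"
  proof
    fix L assume "L \<in> segre_lines I (\<lambda>i. S i - Hs i) (\<lambda>i. compl_lines (Ls i) (Hs i))"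
    then obtain a i l where a: "a \<in> PiE I (\<lambda>i. S i - Hs i)" and i: "i \<in> I"
      and l: "l \<in> Ls i" and nl: "\<not> l \<subseteq> Hs i" and L: "L = segre_line a i (l - Hs i)"
      unfolding compl_lines_def segre_lines_def by blast
    have a': "a \<in> PiE I S" using a by (auto simp: PiE_iff)
    have g: "\<forall>s\<in>I-{i}. a s \<notin> Hs s" using a by (auto simp: PiE_iff)
    have lS: "l \<subseteq> S i" using pls i l unfolding partial_linear_space_def by blast
    have m: "segre_line a i l - segre_hyp I S Hs = segre_line a i (l - Hs i)"
    proof -
      have inH: "a(i:=x) \<in> segre_hyp I S Hs \<longleftrightarrow> x \<in> Hs i" if "x \<in> l" for x
        using that lS a' i upd_PiE[OF a' i] g by (auto simp: hyp_iff)
      show ?thesis using inH by (auto simp: line_mem; blast)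
    qed
    obtain x where "x \<in> l - Hs i" using nl by blast
    then have "a(i:=x) \<in> segre_line a i (l - Hs i)" by (auto simp: line_mem)
    then have "\<not> segre_line a i l \<subseteq> segre_hyp I S Hs" using m by blast
    moreover have "segre_line a i l \<in> segre_lines I S Ls"
      using a' i l unfolding segre_lines_def by blast
    ultimately show "L \<in> compl_lines (segre_lines I S Ls) (segre_hyp I S Hs)"
      using m L unfolding compl_lines_def by blast
  qed
qed

lemma par_fwd:
  assumes pls: "\<forall>i\<in>I. partial_linear_space (S i) (Ls i)"
    and hyp: "\<forall>i\<in>I. hyperplane (S i) (Ls i) (Hs i)"
    and cp: "compl_par (segre_lines I S Ls) (segre_hyp I S Hs) L K"
  shows "segre_par I (\<lambda>i. S i - Hs i) (\<lambda>i. compl_lines (Ls i) (Hs i))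
                   (\<lambda>i. compl_par (Ls i) (Hs i)) L K"
proof -
  obtain a i l b j k where a: "a \<in> PiE I S" and i: "i \<in> I" and l: "l \<in> Ls i"
    and b: "b \<in> PiE I S" and j: "j \<in> I" and k: "k \<in> Ls j"
    and nhl: "\<not> segre_line a i l \<subseteq> segre_hyp I S Hs"
    and nhk: "\<not> segre_line b j k \<subseteq> segre_hyp I S Hs"
    and L: "L = segre_line a i l - segre_hyp I S Hs"
    and K: "K = segre_line b j k - segre_hyp I S Hs"
    and eq: "inf_pt (segre_hyp I S Hs) (segre_line a i l) = inf_pt (segre_hyp I S Hs) (segre_line b j k)"
    using cp unfolding compl_par_def segre_lines_def by blast
  note ga = good_line[OF pls hyp a i l nhl]
  note gb = good_line[OF pls hyp b j k nhk]
  define p where "p = inf_pt (Hs i) l"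
  define q where "q = inf_pt (Hs j) k"
  have pH: "p \<in> Hs i" using fac_inf hyp i l ga unfolding p_def by blast
  have qH: "q \<in> Hs j" using fac_inf hyp j k gb unfolding q_def by blast
  have eq2: "a(i:=p) = b(j:=q)" using eq ga gb unfolding p_def q_def by metis
  have ij: "i = j"
  proof (rule ccontr)
    assume "i \<noteq> j"
    then have "p = b i" using fun_cong[OF eq2, of i] by simp
    then show False using gb pH i \<open>i \<noteq> j\<close> by blast
  qed
  have pq: "p = q" using fun_cong[OF eq2, of i] ij by simp
  have ab: "a s = b s" if "s \<noteq> i" for s using fun_cong[OF eq2, of s] ij that by simp
  have lS: "l \<subseteq> S i" using pls i l unfolding partial_linear_space_def by blast
  have kS: "k \<subseteq> S j" using pls j k unfolding partial_linear_space_def by blast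
  obtain x where x: "x \<in> l - Hs i" "a(i:=x) \<in> PiE I (\<lambda>i. S i - Hs i)"
    using pick[OF a i lS] ga by blast
  obtain y where y: "y \<in> k - Hs j" "b(j:=y) \<in> PiE I (\<lambda>i. S i - Hs i)"
    using pick[OF b j kS] gb by blast
  have l': "l - Hs i \<in> compl_lines (Ls i) (Hs i)" using l ga unfolding compl_lines_def by blast
  have k': "k - Hs j \<in> compl_lines (Ls j) (Hs j)" using k gb unfolding compl_lines_def by blast
  have L': "L = segre_line (a(i:=x)) i (l - Hs i)" using L ga line_upd by metis
  have K': "K = segre_line (b(j:=y)) j (k - Hs j)" using K gb line_upd by metis
  have cpf: "compl_par (Ls i) (Hs i) (l - Hs i) (k - Hs i)"
    unfolding compl_par_def using l k ij ga gb pq unfolding p_def q_def by blast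
  have "\<forall>s\<in>I. coord_set (a(i:=x)) i (l - Hs i) s = coord_set (b(j:=y)) j (k - Hs j) s
           \<or> (s = i \<and> s = j \<and> compl_par (Ls i) (Hs i) (l - Hs i) (k - Hs j))"
    using ab ij cpf by (auto simp: coord_set_def)
  then show ?thesis unfolding segre_par_def using x y i j l' k' L' K' by blast
qed

lemma good2:
  assumes pls: "\<forall>i\<in>I. partial_linear_space (S i) (Ls i)"
    and hyp: "\<forall>i\<in>I. hyperplane (S i) (Ls i) (Hs i)"
    and a: "a \<in> PiE I (\<lambda>i. S i - Hs i)" and i: "i \<in> I"
    and l: "l \<in> Ls i" and nl: "\<not> l \<subseteq> Hs i"
  shows "segre_line a i l \<in> segre_lines I S Ls \<and> \<not> segre_line a i l \<subseteq> segre_hyp I S Hs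
     \<and> segre_line a i l - segre_hyp I S Hs = segre_line a i (l - Hs i)
     \<and> inf_pt (segre_hyp I S Hs) (segre_line a i l) = a(i := inf_pt (Hs i) l)"
proof -
  have a': "a \<in> PiE I S" using a by (auto simp: PiE_iff)
  have g: "\<forall>s\<in>I-{i}. a s \<notin> Hs s" using a by (auto simp: PiE_iff)
  have lS: "l \<subseteq> S i" using pls i l unfolding partial_linear_space_def by blast
  have m: "segre_line a i l - segre_hyp I S Hs = segre_line a i (l - Hs i)"
  proof -
    have inH: "a(i:=x) \<in> segre_hyp I S Hs \<longleftrightarrow> x \<in> Hs i" if "x \<in> l" for x
      using that lS a' i upd_PiE[OF a' i] g by (auto simp: hyp_iff)
    show ?thesis using inH by (auto simp: line_mem; blast)
  qed
  obtain x where "x \<in> l - Hs i" using nl by blast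
  then have "a(i:=x) \<in> segre_line a i (l - Hs i)" by (auto simp: line_mem)
  then have nh: "\<not> segre_line a i l \<subseteq> segre_hyp I S Hs" using m by blast
  moreover have "segre_line a i l \<in> segre_lines I S Ls"
    using a' i l unfolding segre_lines_def by blast
  ultimately show ?thesis using good_line[OF pls hyp a' i l nh] by blast
qed

lemma par_bwd:
  assumes pls: "\<forall>i\<in>I. partial_linear_space (S i) (Ls i)"
    and hyp: "\<forall>i\<in>I. hyperplane (S i) (Ls i) (Hs i)"
    and sp: "segre_par I (\<lambda>i. S i - Hs i) (\<lambda>i. compl_lines (Ls i) (Hs i))
                   (\<lambda>i. compl_par (Ls i) (Hs i)) L K"
  shows "compl_par (segre_lines I S Ls) (segre_hyp I S Hs) L K"
proof -
  obtain a i l' b j k' where a: "a \<in> PiE I (\<lambda>i. S i - Hs i)" and i: "i \<in> I"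
    and l': "l' \<in> compl_lines (Ls i) (Hs i)"
    and b: "b \<in> PiE I (\<lambda>i. S i - Hs i)" and j: "j \<in> I"
    and k': "k' \<in> compl_lines (Ls j) (Hs j)"
    and L: "L = segre_line a i l'" and K: "K = segre_line b j k'"
    and cs: "\<forall>s\<in>I. coord_set a i l' s = coord_set b j k' s \<or> (s = i \<and> s = j \<and> compl_par (Ls i) (Hs i) l' k')"
    using sp unfolding segre_par_def by blast
  obtain l where l: "l \<in> Ls i" "\<not> l \<subseteq> Hs i" "l' = l - Hs i"
    using l' unfolding compl_lines_def by blast
  show ?thesis
  proof (cases "i = j")
    case True
    note ij = True
    have ab: "a s = b s" if "s \<noteq> i" for s
    proof (cases "s \<in> I")
      case True
      then show ?thesis using cs that ij by (auto simp: coord_set_def)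
    next
      case False
      then show ?thesis using a b by (auto simp: PiE_iff extensional_def)
    qed
    have "l' = k' \<or> compl_par (Ls i) (Hs i) l' k'"
      using cs i True by (auto simp: coord_set_def)
    then have cpi: "compl_par (Ls i) (Hs i) l' k'"
      using l unfolding compl_par_def by blast
    then obtain l2 k2 where l2: "l2 \<in> Ls i" "k2 \<in> Ls i" "\<not> l2 \<subseteq> Hs i" "\<not> k2 \<subseteq> Hs i"
      "l' = l2 - Hs i" "k' = k2 - Hs i" "inf_pt (Hs i) l2 = inf_pt (Hs i) k2"
      unfolding compl_par_def by blast
    note g1 = good2[OF pls hyp a i l2(1) l2(3)]
    note g2 = good2[OF pls hyp b i l2(2) l2(4)]
    have "a(i := inf_pt (Hs i) l2) = b(i := inf_pt (Hs i) k2)"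
      using ab l2(7) by (auto simp: fun_eq_iff)
    then show ?thesis unfolding compl_par_def using g1 g2 L K True l2 by metis
  next
    case False
    note nij = False
    have e1: "l' = {b i}" using cs i False by (auto simp: coord_set_def)
    have e2: "k' = {a j}" using cs j False by (force simp: coord_set_def)
    have ab: "a s = b s" if "s \<noteq> i" "s \<noteq> j" for s
    proof (cases "s \<in> I")
      case True
      then show ?thesis using cs that by (auto simp: coord_set_def)
    next
      case False
      then show ?thesis using a b by (auto simp: PiE_iff extensional_def)
    qed
    have "a(i := b i) = b(j := a j)" using ab nij by (auto simp: fun_eq_iff)
    then have LK: "L = K" using L K e1 e2 by (simp add: segre_line_def)
    note g1 = good2[OF pls hyp a i l(1) l(2)]
    show ?thesis unfolding compl_par_def using g1 L LK l(3) by metis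
  qed
qed

theorem proposition3p9:
  fixes I :: "'i set" and S :: "'i \<Rightarrow> 'p set" and Ls :: "'i \<Rightarrow> 'p set set"
    and Hs :: "'i \<Rightarrow> 'p set"
  assumes "countable I"
    and "\<exists>i\<in>I. \<exists>j\<in>I. i \<noteq> j"
    and "\<forall>i\<in>I. partial_linear_space (S i) (Ls i)"
    and "\<forall>i\<in>I. hyperplane (S i) (Ls i) (Hs i)"
  shows "segre_points I S - segre_hyp I S Hs = segre_points I (\<lambda>i. S i - Hs i)
       \<and> compl_lines (segre_lines I S Ls) (segre_hyp I S Hs)
           = segre_lines I (\<lambda>i. S i - Hs i) (\<lambda>i. compl_lines (Ls i) (Hs i))
       \<and> (\<forall>L\<in>segre_lines I (\<lambda>i. S i - Hs i) (\<lambda>i. compl_lines (Ls i) (Hs i)).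
          \<forall>K\<in>segre_lines I (\<lambda>i. S i - Hs i) (\<lambda>i. compl_lines (Ls i) (Hs i)).
            compl_par (segre_lines I S Ls) (segre_hyp I S Hs) L K
            \<longleftrightarrow> segre_par I (\<lambda>i. S i - Hs i) (\<lambda>i. compl_lines (Ls i) (Hs i))
                   (\<lambda>i. compl_par (Ls i) (Hs i)) L K)"
  using points_eq lines_eq[OF assms(3,4)] par_fwd[OF assms(3,4)] par_bwd[OF assms(3,4)] by blast

end
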